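(* Consider the generalized trimmed lasso problem $$\min_{x_0,\ldots,x_L}\ f(x_0,\ldots,x_L)+\sum_{l=1}^L\gamma_l T_{K_l,m_l,p_l}(D_lx_l-c_l),$$ where $f$ is $M$-smooth on the whole space, and suppose that for every $l\in[L]$ there is $\overline{x}_l$ with $D_l\overline{x}_l=c_l$. Let $x^*=(x_0^*,\ldots,x_L^* )$ be a d-stationary point and $C_0,\ldots,C_L>0$ be constants with $\|x_l^*\|_2\le C_l$ for $l=0,\ldots,L$. If for all $l\in[L]$ $$\gamma_l>\frac{1}{\sigma_{K_l,m_l,p_l}(D_l)}\Big(\|\nabla_{x_l}f(0,\ldots,0)\|_2+M\sqrt{\textstyle\sum_{k=0}^L C_k^2}\Big),$$ then $T_{K_l,m_l,p_l}(D_lx_l^*-c_l)=0$ for all $l\in[L]$. For those $l$ with $p_l=1$, $D_l=I$, $c_l=0$, the threshold on the right-hand side may be replaced by $\|\nabla_{x_l}f(0,\ldots,0)\|_\infty+M\sqrt{\sum_{k=0}^LC_k^2}$.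
   Context: Trimmed $\ell_1$ norm: for $z=(z_1^\top,\ldots,z_m^\top)^\top\in\mathbb{R}^{mp}$, $z_i\in\mathbb{R}^p$, $K\in\{0,\ldots,m-1\}$: $T_{K,m,p}(z)=\min_{\Lambda\subset[m],|\Lambda|=m-K}\sum_{i\in\Lambda}\|z_i\|_2$. Data: $n_0\ge0$, $\gamma_l>0$, $K_l\in\{0,\ldots,m_l-1\}$, $c_l\in\mathbb{R}^{m_lp_l}$, $D_l\ne0$ an $m_lp_l\times n_l$ matrix. $f$ is $M$-smooth if it is continuously differentiable with $\|\nabla f(x)-\nabla f(y)\|_2\le M\|x-y\|_2$; $\nabla_{x_l}f$ is the block of the gradient for $x_l$. $x^*$ is d-stationary if the directional derivative of the objective at $x^*$ is $\ge0$ in every direction. $\sigma_{\min}(A)$ = smallest nonzero singular value of $A\ne0$. For $D$ with $p\times n$ blocks $(D)_1,\ldots,(D)_m$ and $(D)_\Lambda$ the submatrix of blocks in $\Lambda$: $\sigma_{K,m,p}(D)=\sigma_{\min}(D)$ if $D$ is surjective, else $\min\{\sigma_{\min}((D)_\Lambda)\mid |\Lambda|=m-K,(D)_\Lambda\ne0\}$. *)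

theory Defs
  imports "HOL-Analysis.Analysis" "Jordan_Normal_Form.Char_Poly" "Jordan_Normal_Form.DL_Submatrix"
begin

definition vnorm2 :: "real vec \<Rightarrow> real" where
  "vnorm2 v = sqrt (\<Sum>i<dim_vec v. (v $ i)\<^sup>2)"

definition vnorm_inf :: "real vec \<Rightarrow> real" where
  "vnorm_inf v = Max (insert 0 {\<bar>v $ i\<bar> | i. i < dim_vec v})"

text \<open>The i-th block (0-based, i < m) of a vector z of length m*p, each block of length p.\<close>
definition block_vec :: "nat \<Rightarrow> real vec \<Rightarrow> nat \<Rightarrow> real vec" where
  "block_vec p z i = vec p (\<lambda>j. z $ (i * p + j))"

text \<open>T_{K,m,p}(z) = min over index sets Lambda of size m-K of sum of block 2-norms.
  Blocks are indexed 0..m-1 instead of 1..m.\<close>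
definition trimmed :: "nat \<Rightarrow> nat \<Rightarrow> nat \<Rightarrow> real vec \<Rightarrow> real" where
  "trimmed K m p z = Min {(\<Sum>i\<in>\<Lambda>. vnorm2 (block_vec p z i)) | \<Lambda>. \<Lambda> \<subseteq> {..<m} \<and> card \<Lambda> = m - K}"

definition sigma_min :: "real mat \<Rightarrow> real" where
  "sigma_min A = sqrt (Min {ev. eigenvalue (transpose_mat A * A) ev \<and> ev \<noteq> 0})"

definition mat_surj :: "real mat \<Rightarrow> bool" where
  "mat_surj D \<longleftrightarrow> (\<forall>b \<in> carrier_vec (dim_row D). \<exists>x \<in> carrier_vec (dim_col D). D *\<^sub>v x = b)"

text \<open>(D)_Lambda: the submatrix of D consisting of the row blocks (of height p) with index in Lambda,
  kept in their original order.\<close>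
definition row_blocks :: "nat \<Rightarrow> real mat \<Rightarrow> nat set \<Rightarrow> real mat" where
  "row_blocks p D \<Lambda> = submatrix D {i * p + j | i j. i \<in> \<Lambda> \<and> j < p} {..<dim_col D}"

definition sigma_K :: "nat \<Rightarrow> nat \<Rightarrow> nat \<Rightarrow> real mat \<Rightarrow> real" where
  "sigma_K K m p D =
     (if mat_surj D then sigma_min D
      else Min {sigma_min (row_blocks p D \<Lambda>) | \<Lambda>.
                  \<Lambda> \<subseteq> {..<m} \<and> card \<Lambda> = m - K \<and> row_blocks p D \<Lambda> \<noteq> 0\<^sub>m (dim_row (row_blocks p D \<Lambda>)) (dim_col D)})"

definition M_smooth_grad :: "('a::euclidean_space \<Rightarrow> real) \<Rightarrow> ('a \<Rightarrow> 'a) \<Rightarrow> real \<Rightarrow> bool" where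
  "M_smooth_grad f g M \<longleftrightarrow>
     (\<forall>x. (f has_derivative (\<lambda>h. g x \<bullet> h)) (at x)) \<and> continuous_on UNIV g \<and>
     (\<forall>x y. norm (g x - g y) \<le> M * norm (x - y))"

definition has_dir_deriv :: "('a::real_normed_vector \<Rightarrow> real) \<Rightarrow> 'a \<Rightarrow> 'a \<Rightarrow> real \<Rightarrow> bool" where
  "has_dir_deriv F x d D \<longleftrightarrow> ((\<lambda>t. (F (x + t *\<^sub>R d) - F x) / t) \<longlongrightarrow> D) (at_right 0)"

definition d_stationary :: "('a::real_normed_vector \<Rightarrow> real) \<Rightarrow> 'a \<Rightarrow> bool" where
  "d_stationary F x \<longleftrightarrow> (\<forall>d. \<exists>D. has_dir_deriv F x d D \<and> D \<ge> 0)"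

text \<open>The whole variable lives in a Euclidean space; e l i (i < n l) is the basis vector giving
  the i-th coordinate of block x_l. The block x_l as a vector in R^{n_l}:\<close>
definition blk :: "(nat \<Rightarrow> nat \<Rightarrow> 'a::euclidean_space) \<Rightarrow> (nat \<Rightarrow> nat) \<Rightarrow> nat \<Rightarrow> 'a \<Rightarrow> real vec" where
  "blk e n l x = vec (n l) (\<lambda>i. x \<bullet> e l i)"

end

theory Submission
  imports Defs "Jordan_Normal_Form.Spectral_Radius"
begin

no_notation Finite_Cartesian_Product.vec.vec_nth (infixl "$" 90)


lemma quad_zero:
  fixes a b :: real
  assumes "\<And>t. 0 \<le> 2*t*a + t^2 * b"
  shows "a = 0"
proof (rule ccontr)
  assume a: "a \<noteq> 0"
  define s where "s = 1/(\<bar>b\<bar>+1)"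
  have s: "s > 0" unfolding s_def by (simp add: add_pos_nonneg)
  have sb: "s * b < 1" unfolding s_def by (simp add: divide_simps, linarith)
  have "0 \<le> 2*(-s*a)*a + (-s*a)^2 * b" by (rule assms)
  hence "0 \<le> (s*a^2)*(s*b - 2)" by (simp add: power2_eq_square algebra_simps)
  moreover have "s*a^2 > 0" using s a by simp
  ultimately have "s*b - 2 \<ge> 0" by (simp add: zero_le_mult_iff)
  with sb show False by linarith
qed

lemma sp_expand:
  fixes u v :: "real vec"
  assumes "u \<in> carrier_vec n" "v \<in> carrier_vec n"
  shows "scalar_prod (u + t \<cdot>\<^sub>v v) (u + t \<cdot>\<^sub>v v) = scalar_prod u u + 2*t* scalar_prod u v + t^2 * scalar_prod v v"
proof -
  have "scalar_prod (u + t \<cdot>\<^sub>v v) (u + t \<cdot>\<^sub>v v) = (\<Sum>i\<in>{0..<n}. u$i * u$i + 2*t*(u$i * v$i) + t^2 * (v$i * v$i))"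
    unfolding scalar_prod_def using assms by (intro sum.cong, auto simp: power2_eq_square algebra_simps)
  also have "\<dots> = scalar_prod u u + 2*t* scalar_prod u v + t^2 * scalar_prod v v"
    unfolding scalar_prod_def using assms by (simp add: sum.distrib sum_distrib_left)
  finally show ?thesis .
qed

lemma sp_self_nonneg: "scalar_prod (v::real vec) v \<ge> 0"
  unfolding scalar_prod_def by (intro sum_nonneg, auto)

lemma sp_self_zero:
  assumes "(v::real vec) \<in> carrier_vec n" "scalar_prod v v = 0"
  shows "v = 0\<^sub>v n"
proof (rule eq_vecI)
  show "dim_vec v = dim_vec (0\<^sub>v n)" using assms by auto
  fix i assume i: "i < dim_vec (0\<^sub>v n)"
  have "(\<Sum>j\<in>{0..<dim_vec v}. v$j * v$j) = 0" using assms(2) unfolding scalar_prod_def by simp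
  hence "\<forall>j\<in>{0..<dim_vec v}. v$j * v$j = 0" by (subst (asm) sum_nonneg_eq_0_iff, auto)
  thus "v $ i = 0\<^sub>v n $ i" using i assms(1) by auto
qed

lemma vnorm2_sp: "vnorm2 v = sqrt (scalar_prod v v)"
  unfolding vnorm2_def scalar_prod_def by (simp add: atLeast0LessThan power2_eq_square)

section \<open>Embedding into a Euclidean space\<close>

definition emb :: "(nat \<Rightarrow> 'b::euclidean_space) \<Rightarrow> nat \<Rightarrow> real vec \<Rightarrow> 'b" where
  "emb E n v = (\<Sum>i<n. (v $ i) *\<^sub>R E i)"

definition unemb :: "(nat \<Rightarrow> 'b::euclidean_space) \<Rightarrow> nat \<Rightarrow> 'b \<Rightarrow> real vec" where
  "unemb E n x = vec n (\<lambda>i. inner x (E i))"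

lemma E_orth:
  fixes E :: "nat \<Rightarrow> 'b::euclidean_space"
  assumes "inj_on E {..<n}" "E ` {..<n} \<subseteq> Basis" "i < n" "j < n"
  shows "inner (E i) (E j) = (if i = j then 1 else 0)"
proof -
  have "E i \<in> Basis" "E j \<in> Basis" using assms by auto
  moreover have "E i = E j \<longleftrightarrow> i = j" using assms(1,3,4) by (auto dest: inj_onD)
  ultimately show ?thesis by (simp add: inner_Basis)
qed

lemma emb_inner:
  fixes E :: "nat \<Rightarrow> 'b::euclidean_space"
  assumes "inj_on E {..<n}" "E ` {..<n} \<subseteq> Basis" "j < n"
  shows "inner (emb E n v) (E j) = v $ j"
proof -
  have "inner (emb E n v) (E j) = (\<Sum>i<n. v $ i * inner (E i) (E j))"
    unfolding emb_def by (simp add: inner_sum_left)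
  also have "\<dots> = (\<Sum>i<n. if i = j then v $ i else 0)"
    by (rule sum.cong, auto simp: E_orth[OF assms(1,2)] assms(3))
  also have "\<dots> = v $ j" using assms(3) by simp
  finally show ?thesis .
qed

lemma unemb_emb:
  fixes E :: "nat \<Rightarrow> 'b::euclidean_space"
  assumes "inj_on E {..<n}" "E ` {..<n} \<subseteq> Basis" "v \<in> carrier_vec n"
  shows "unemb E n (emb E n v) = v"
  using assms by (intro eq_vecI, auto simp: unemb_def emb_inner)

lemma unemb_carrier[simp]: "unemb E n x \<in> carrier_vec n" "dim_vec (unemb E n x) = n"
  unfolding unemb_def by auto

lemma unemb_index[simp]: "i < n \<Longrightarrow> unemb E n x $ i = inner x (E i)"
  unfolding unemb_def by auto

lemma norm_emb_sq:
  fixes E :: "nat \<Rightarrow> 'b::euclidean_space"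
  assumes "inj_on E {..<n}" "E ` {..<n} \<subseteq> Basis" "v \<in> carrier_vec n"
  shows "(norm (emb E n v))^2 = scalar_prod v v"
proof -
  have "(norm (emb E n v))^2 = inner (emb E n v) (emb E n v)" by (simp add: power2_norm_eq_inner)
  also have "\<dots> = (\<Sum>i<n. v $ i * inner (emb E n v) (E i))"
    by (subst (2) emb_def) (simp add: inner_sum_right)
  also have "\<dots> = (\<Sum>i<n. v $ i * v $ i)"
    by (rule sum.cong, auto simp: emb_inner[OF assms(1,2)])
  also have "\<dots> = scalar_prod v v" unfolding scalar_prod_def using assms(3)
    by (simp add: atLeast0LessThan)
  finally show ?thesis .
qed

lemma sp_unemb: "scalar_prod (unemb E n x) (unemb E n x) = (\<Sum>i<n. (inner x (E i))^2)"
  unfolding scalar_prod_def by (simp add: atLeast0LessThan power2_eq_square)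

lemma bessel:
  fixes E :: "nat \<Rightarrow> 'b::euclidean_space"
  assumes "inj_on E {..<n}" "E ` {..<n} \<subseteq> Basis"
  shows "(\<Sum>i<n. (inner x (E i))^2) \<le> (norm x)^2"
proof -
  have "(\<Sum>i<n. (inner x (E i))^2) = (\<Sum>b\<in>E ` {..<n}. (inner x b)^2)"
    using assms(1) by (simp add: sum.reindex)
  also have "\<dots> \<le> (\<Sum>b\<in>Basis. (inner x b)^2)"
    by (rule sum_mono2, insert assms(2), auto)
  also have "\<dots> = (norm x)^2"
  proof -
    have "(\<Sum>b\<in>Basis. (inner x b)^2) = inner x x" by (simp add: euclidean_inner[of x x] power2_eq_square)
    thus ?thesis by (simp add: power2_norm_eq_inner)
  qed
  finally show ?thesis .
qed

lemma sp_unemb_le: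
  fixes E :: "nat \<Rightarrow> 'b::euclidean_space"
  assumes "inj_on E {..<n}" "E ` {..<n} \<subseteq> Basis"
  shows "scalar_prod (unemb E n x) (unemb E n x) \<le> (norm x)^2"
  using bessel[OF assms] sp_unemb by metis

lemma mult_unemb_index:
  assumes "A \<in> carrier_mat r n" "k < r"
  shows "(A *\<^sub>v unemb E n x) $ k = (\<Sum>i<n. A $$ (k,i) * inner x (E i))"
  using assms unfolding mult_mat_vec_def scalar_prod_def by (auto simp: atLeast0LessThan intro: sum.cong)

lemma sp_mult_unemb:
  assumes "A \<in> carrier_mat r n"
  shows "scalar_prod (A *\<^sub>v unemb E n x) (A *\<^sub>v unemb E n x) = (\<Sum>k<r. (\<Sum>i<n. A $$ (k,i) * inner x (E i))^2)"
proof -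
  have "scalar_prod (A *\<^sub>v unemb E n x) (A *\<^sub>v unemb E n x) = (\<Sum>k<r. ((A *\<^sub>v unemb E n x) $ k)^2)"
    using assms unfolding scalar_prod_def by (simp add: atLeast0LessThan power2_eq_square)
  also have "\<dots> = (\<Sum>k<r. (\<Sum>i<n. A $$ (k,i) * inner x (E i))^2)"
    by (rule sum.cong, simp, subst mult_unemb_index[OF assms], auto)
  finally show ?thesis .
qed

lemma sp_unemb_left: "v \<in> carrier_vec n \<Longrightarrow> scalar_prod (unemb E n x) v = (\<Sum>i<n. inner x (E i) * v $ i)"
  unfolding scalar_prod_def by (auto simp: atLeast0LessThan)

lemma rayleigh:
  fixes E :: "nat \<Rightarrow> 'b::euclidean_space" and A :: "real mat"
  assumes E: "inj_on E {..<n}" "E ` {..<n} \<subseteq> Basis"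
    and A: "A \<in> carrier_mat r n"
    and a: "a \<in> carrier_vec n" "scalar_prod a a = 1"
      "\<forall>k\<in>carrier_vec n. A *\<^sub>v k = 0\<^sub>v r \<longrightarrow> scalar_prod a k = 0"
  shows "\<exists>y\<in>carrier_vec n. scalar_prod y y = 1 \<and> (\<forall>k\<in>carrier_vec n. A *\<^sub>v k = 0\<^sub>v r \<longrightarrow> scalar_prod y k = 0) \<and>
     (\<forall>v\<in>carrier_vec n. scalar_prod v v = 1 \<and> (\<forall>k\<in>carrier_vec n. A *\<^sub>v k = 0\<^sub>v r \<longrightarrow> scalar_prod v k = 0) \<longrightarrow>
        scalar_prod (A *\<^sub>v y) (A *\<^sub>v y) \<le> scalar_prod (A *\<^sub>v v) (A *\<^sub>v v))"
proof -
  define Z where "Z = {k \<in> carrier_vec n. A *\<^sub>v k = 0\<^sub>v r}"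
  define K where "K = {x::'b. norm x \<le> 1 \<and> (\<Sum>i<n. (inner x (E i))^2) = 1 \<and>
     (\<forall>k. k \<in> Z \<longrightarrow> (\<Sum>i<n. inner x (E i) * k $ i) = 0)}"
  define F where "F = (\<lambda>x::'b. \<Sum>k<r. (\<Sum>i<n. A $$ (k,i) * inner x (E i))^2)"
  have c1: "closed {x::'b. k \<in> Z \<longrightarrow> (\<Sum>i<n. inner x (E i) * k $ i) = 0}" for k
    by (cases "k \<in> Z", auto intro!: closed_Collect_eq continuous_intros)
  have "closed K" unfolding K_def
    by (intro closed_Collect_conj closed_Collect_le closed_Collect_eq closed_Collect_all c1 continuous_intros)
  moreover have "bounded K" by (rule bounded_subset[of "cball 0 1"], auto simp: K_def)
  ultimately have cK: "compact K" by (simp add: compact_eq_bounded_closed)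
  have embK: "emb E n v \<in> K" if v: "v \<in> carrier_vec n" "scalar_prod v v = 1"
     "\<forall>k\<in>carrier_vec n. A *\<^sub>v k = 0\<^sub>v r \<longrightarrow> scalar_prod v k = 0" for v
  proof -
    have "(norm (emb E n v))^2 = 1" using norm_emb_sq[OF E v(1)] v(2) by simp
    hence n1: "norm (emb E n v) \<le> 1" by (auto simp: power2_eq_1_iff)
    have u: "unemb E n (emb E n v) = v" by (rule unemb_emb[OF E v(1)])
    have "(\<Sum>i<n. (inner (emb E n v) (E i))^2) = 1"
      using sp_unemb[of E n "emb E n v"] u v(2) by simp
    moreover have "(\<Sum>i<n. inner (emb E n v) (E i) * k $ i) = 0" if "k \<in> Z" for k
      using sp_unemb_left[of k n E "emb E n v"] u v(3) that unfolding Z_def by auto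
    ultimately show ?thesis using n1 unfolding K_def by auto
  qed
  have "K \<noteq> {}" using embK[OF a] by auto
  moreover have "continuous_on K F" unfolding F_def by (intro continuous_intros)
  ultimately obtain x0 where x0: "x0 \<in> K" "\<And>x. x \<in> K \<Longrightarrow> F x0 \<le> F x"
    using continuous_attains_inf[OF cK] by blast
  define y where "y = unemb E n x0"
  have Fsp: "F x = scalar_prod (A *\<^sub>v unemb E n x) (A *\<^sub>v unemb E n x)" for x
    unfolding F_def by (rule sp_mult_unemb[OF A, symmetric])
  show ?thesis
  proof (intro bexI[of _ y] conjI ballI impI)
    show "y \<in> carrier_vec n" unfolding y_def by simp
    show "scalar_prod y y = 1" using x0(1) unfolding y_def K_def sp_unemb by simp
    show "scalar_prod y k = 0" if "k \<in> carrier_vec n" "A *\<^sub>v k = 0\<^sub>v r" for k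
      using x0(1) that unfolding y_def K_def Z_def sp_unemb_left[OF that(1)] by auto
    show "scalar_prod (A *\<^sub>v y) (A *\<^sub>v y) \<le> scalar_prod (A *\<^sub>v v) (A *\<^sub>v v)"
      if "v \<in> carrier_vec n" "scalar_prod v v = 1 \<and> (\<forall>k\<in>carrier_vec n. A *\<^sub>v k = 0\<^sub>v r \<longrightarrow> scalar_prod v k = 0)" for v
    proof -
      have "F x0 \<le> F (emb E n v)" using x0(2) embK that by auto
      thus ?thesis unfolding Fsp y_def unemb_emb[OF E that(1)] .
    qed
  qed
qed

lemma minnorm:
  fixes E :: "nat \<Rightarrow> 'b::euclidean_space" and A :: "real mat"
  assumes E: "inj_on E {..<n}" "E ` {..<n} \<subseteq> Basis"
    and A: "A \<in> carrier_mat r n"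
    and x0: "x0 \<in> carrier_vec n"
  shows "\<exists>y\<in>carrier_vec n. A *\<^sub>v y = A *\<^sub>v x0 \<and>
     (\<forall>v\<in>carrier_vec n. A *\<^sub>v v = A *\<^sub>v x0 \<longrightarrow> scalar_prod y y \<le> scalar_prod v v)"
proof -
  define R where "R = sqrt (scalar_prod x0 x0)"
  define K where "K = {x::'b. norm x \<le> R \<and> (\<forall>k. k < r \<longrightarrow> (\<Sum>i<n. A $$ (k,i) * inner x (E i)) = (A *\<^sub>v x0) $ k)}"
  define F where "F = (\<lambda>x::'b. \<Sum>i<n. (inner x (E i))^2)"
  have eqv: "(\<forall>k. k < r \<longrightarrow> (\<Sum>i<n. A $$ (k,i) * inner x (E i)) = (A *\<^sub>v x0) $ k) \<longleftrightarrow>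
     A *\<^sub>v unemb E n x = A *\<^sub>v x0" for x
  proof
    assume h: "\<forall>k. k < r \<longrightarrow> (\<Sum>i<n. A $$ (k,i) * inner x (E i)) = (A *\<^sub>v x0) $ k"
    show "A *\<^sub>v unemb E n x = A *\<^sub>v x0"
    proof (rule eq_vecI)
      fix k assume k: "k < dim_vec (A *\<^sub>v x0)"
      hence k': "k < r" using A by simp
      show "(A *\<^sub>v unemb E n x) $ k = (A *\<^sub>v x0) $ k" unfolding mult_unemb_index[OF A k'] using h k' by blast
    qed (insert A, simp)
  next
    assume h: "A *\<^sub>v unemb E n x = A *\<^sub>v x0"
    show "\<forall>k. k < r \<longrightarrow> (\<Sum>i<n. A $$ (k,i) * inner x (E i)) = (A *\<^sub>v x0) $ k"
      using h mult_unemb_index[OF A] by metis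
  qed
  have c1: "closed {x::'b. k < r \<longrightarrow> (\<Sum>i<n. A $$ (k,i) * inner x (E i)) = (A *\<^sub>v x0) $ k}" for k
    by (cases "k < r", auto intro!: closed_Collect_eq continuous_intros)
  have "closed K" unfolding K_def
    by (intro closed_Collect_conj closed_Collect_le closed_Collect_all c1 continuous_intros)
  moreover have "bounded K" by (rule bounded_subset[of "cball 0 R"], auto simp: K_def)
  ultimately have cK: "compact K" by (simp add: compact_eq_bounded_closed)
  have embK: "emb E n v \<in> K" if v: "v \<in> carrier_vec n" "scalar_prod v v \<le> scalar_prod x0 x0"
     "A *\<^sub>v v = A *\<^sub>v x0" for v
  proof -
    have "(norm (emb E n v))^2 \<le> R^2" using norm_emb_sq[OF E v(1)] v(2) sp_self_nonneg[of x0]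
      unfolding R_def by simp
    hence n1: "norm (emb E n v) \<le> R" unfolding R_def
      by (meson power2_le_imp_le real_sqrt_ge_zero sp_self_nonneg)
    have u: "unemb E n (emb E n v) = v" by (rule unemb_emb[OF E v(1)])
    show ?thesis using n1 eqv[of "emb E n v"] u v(3) unfolding K_def by auto
  qed
  have "K \<noteq> {}" using embK[OF x0] by auto
  moreover have "continuous_on K F" unfolding F_def by (intro continuous_intros)
  ultimately obtain xm where xm: "xm \<in> K" "\<And>x. x \<in> K \<Longrightarrow> F xm \<le> F x"
    using continuous_attains_inf[OF cK] by blast
  define y where "y = unemb E n xm"
  have Fsp: "F x = scalar_prod (unemb E n x) (unemb E n x)" for x
    unfolding F_def sp_unemb by simp
  show ?thesis
  proof (intro bexI[of _ y] conjI ballI impI)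
    show "y \<in> carrier_vec n" unfolding y_def by simp
    show "A *\<^sub>v y = A *\<^sub>v x0" using xm(1) eqv unfolding y_def K_def by auto
    show "scalar_prod y y \<le> scalar_prod v v" if v: "v \<in> carrier_vec n" "A *\<^sub>v v = A *\<^sub>v x0" for v
    proof (cases "scalar_prod v v \<le> scalar_prod x0 x0")
      case True
      have "F xm \<le> F (emb E n v)" using xm(2) embK v True by auto
      thus ?thesis unfolding Fsp y_def unemb_emb[OF E v(1)] .
    next
      case False
      have "scalar_prod y y \<le> (norm xm)^2" unfolding y_def by (rule sp_unemb_le[OF E])
      also have "\<dots> \<le> R^2" using xm(1) unfolding K_def by (simp add: power_mono)
      also have "\<dots> = scalar_prod x0 x0" unfolding R_def using sp_self_nonneg by simp
      finally show ?thesis using False by linarith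
    qed
  qed
qed

lemma normalize_vec:
  fixes A :: "real mat"
  assumes A: "A \<in> carrier_mat r n" and z: "z \<in> carrier_vec n" and N: "scalar_prod z z > 0"
  defines "w \<equiv> (1 / sqrt (scalar_prod z z)) \<cdot>\<^sub>v z"
  shows "w \<in> carrier_vec n" "scalar_prod w w = 1"
    "scalar_prod (A *\<^sub>v w) (A *\<^sub>v w) = scalar_prod (A *\<^sub>v z) (A *\<^sub>v z) / scalar_prod z z"
    "\<And>k. k \<in> carrier_vec n \<Longrightarrow> scalar_prod w k = scalar_prod z k / sqrt (scalar_prod z z)"
proof -
  let ?c = "1 / sqrt (scalar_prod z z)"
  have c2: "?c * ?c = 1 / scalar_prod z z" using N by (simp add: real_sqrt_mult[symmetric])
  show "w \<in> carrier_vec n" unfolding w_def using z by simp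
  show "scalar_prod w w = 1" unfolding w_def using z N c2 by (simp add: mult.assoc[symmetric])
  have "A *\<^sub>v w = ?c \<cdot>\<^sub>v (A *\<^sub>v z)" unfolding w_def by (rule mult_mat_vec[OF A z])
  thus "scalar_prod (A *\<^sub>v w) (A *\<^sub>v w) = scalar_prod (A *\<^sub>v z) (A *\<^sub>v z) / scalar_prod z z"
    using A z c2 by (simp add: mult.assoc[symmetric])
  show "scalar_prod w k = scalar_prod z k / sqrt (scalar_prod z z)" if "k \<in> carrier_vec n" for k
    unfolding w_def using z that by simp
qed

lemma sigma_min_bound:
  fixes E :: "nat \<Rightarrow> 'b::euclidean_space" and A :: "real mat"
  assumes E: "inj_on E {..<n}" "E ` {..<n} \<subseteq> Basis"
    and A: "A \<in> carrier_mat r n" and Anz: "A \<noteq> 0\<^sub>m r n"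
    and x0: "x0 \<in> carrier_vec n"
  shows "sigma_min A > 0 \<and> (\<exists>d\<in>carrier_vec n. A *\<^sub>v d = A *\<^sub>v x0 \<and> sigma_min A * vnorm2 d \<le> vnorm2 (A *\<^sub>v x0))"
proof -
  define S where "S = transpose_mat A * A"
  have S: "S \<in> carrier_mat n n" unfolding S_def using A by auto
  have f1: "scalar_prod (S *\<^sub>v u) v = scalar_prod (A *\<^sub>v u) (A *\<^sub>v v)"
    if "u \<in> carrier_vec n" "v \<in> carrier_vec n" for u v
  proof -
    have "S *\<^sub>v u = transpose_mat A *\<^sub>v (A *\<^sub>v u)" unfolding S_def using A that by auto
    thus ?thesis using transpose_vec_mult_scalar[OF A that(2), of "A *\<^sub>v u"] A that by auto
  qed
  define Ev where "Ev = {ev. eigenvalue S ev \<and> ev \<noteq> 0}"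
  have f2: "ev > 0" if "ev \<in> Ev" for ev
  proof -
    from that obtain v where v: "v \<in> carrier_vec n" "v \<noteq> 0\<^sub>v n" "S *\<^sub>v v = ev \<cdot>\<^sub>v v" "ev \<noteq> 0"
      unfolding Ev_def eigenvalue_def eigenvector_def using S by auto
    have "ev * scalar_prod v v = scalar_prod (S *\<^sub>v v) v" using v by simp
    also have "\<dots> = scalar_prod (A *\<^sub>v v) (A *\<^sub>v v)" by (rule f1[OF v(1) v(1)])
    also have "\<dots> \<ge> 0" by (rule sp_self_nonneg)
    finally have "ev * scalar_prod v v \<ge> 0" .
    moreover have "scalar_prod v v > 0" using sp_self_nonneg[of v] sp_self_zero[OF v(1)] v(2) by fastforce
    ultimately show ?thesis using v(4) by (simp add: zero_le_mult_iff)
  qed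
  have finEv: "finite Ev"
    by (rule finite_subset[OF _ card_finite_spectrum(1)[OF S]], auto simp: Ev_def spectrum_def)
  define ker where "ker = {k \<in> carrier_vec n. A *\<^sub>v k = 0\<^sub>v r}"
  obtain i j where ij: "i < r" "j < n" "A $$ (i,j) \<noteq> 0"
  proof -
    { assume "\<forall>i<r. \<forall>j<n. A $$ (i,j) = 0"
      hence "A = 0\<^sub>m r n" using A by (intro eq_matI, auto) }
    thus ?thesis using that Anz by blast
  qed
  define \<rho> where "\<rho> = row A i"
  have \<rho>: "\<rho> \<in> carrier_vec n" unfolding \<rho>_def using A by auto
  have \<rho>nz: "scalar_prod \<rho> \<rho> > 0"
  proof -
    have "\<rho> $ j \<noteq> 0" using ij A unfolding \<rho>_def by auto
    hence "\<rho> \<noteq> 0\<^sub>v n" using ij(2) by auto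
    thus ?thesis using sp_self_nonneg[of \<rho>] sp_self_zero[OF \<rho>] by fastforce
  qed
  have \<rho>ker: "scalar_prod \<rho> k = 0" if "k \<in> carrier_vec n" "A *\<^sub>v k = 0\<^sub>v r" for k
  proof -
    have "scalar_prod \<rho> k = (A *\<^sub>v k) $ i" unfolding \<rho>_def using A ij by auto
    thus ?thesis using that ij by simp
  qed
  define a where "a = (1 / sqrt (scalar_prod \<rho> \<rho>)) \<cdot>\<^sub>v \<rho>"
  note na = normalize_vec[OF A \<rho> \<rho>nz, folded a_def]
  have a_ker: "\<forall>k\<in>carrier_vec n. A *\<^sub>v k = 0\<^sub>v r \<longrightarrow> scalar_prod a k = 0"
    using na(4) \<rho>ker by simp
  obtain y2 where y2: "y2 \<in> carrier_vec n" "scalar_prod y2 y2 = 1"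
    "\<And>k. k\<in>carrier_vec n \<Longrightarrow> A *\<^sub>v k = 0\<^sub>v r \<Longrightarrow> scalar_prod y2 k = 0"
    "\<And>v. v\<in>carrier_vec n \<Longrightarrow> scalar_prod v v = 1 \<Longrightarrow> (\<forall>k\<in>carrier_vec n. A *\<^sub>v k = 0\<^sub>v r \<longrightarrow> scalar_prod v k = 0) \<Longrightarrow>
        scalar_prod (A *\<^sub>v y2) (A *\<^sub>v y2) \<le> scalar_prod (A *\<^sub>v v) (A *\<^sub>v v)"
    using rayleigh[OF E A na(1) na(2) a_ker] by blast
  define \<mu> where "\<mu> = scalar_prod (A *\<^sub>v y2) (A *\<^sub>v y2)"
  have ray: "\<mu> * scalar_prod z z \<le> scalar_prod (A *\<^sub>v z) (A *\<^sub>v z)"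
    if z: "z \<in> carrier_vec n" "\<And>k. k\<in>carrier_vec n \<Longrightarrow> A *\<^sub>v k = 0\<^sub>v r \<Longrightarrow> scalar_prod z k = 0" for z
  proof (cases "scalar_prod z z = 0")
    case True thus ?thesis using sp_self_nonneg by simp
  next
    case False
    hence N: "scalar_prod z z > 0" using sp_self_nonneg[of z] by linarith
    define w where "w = (1 / sqrt (scalar_prod z z)) \<cdot>\<^sub>v z"
    note nw = normalize_vec[OF A z(1) N, folded w_def]
    have "\<mu> \<le> scalar_prod (A *\<^sub>v w) (A *\<^sub>v w)" unfolding \<mu>_def
      by (rule y2(4)[OF nw(1) nw(2)], insert nw(4) z(2), simp)
    also have "\<dots> = scalar_prod (A *\<^sub>v z) (A *\<^sub>v z) / scalar_prod z z" by (rule nw(3))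
    finally show ?thesis using N by (simp add: pos_le_divide_eq)
  qed
  have Ay2: "A *\<^sub>v y2 \<in> carrier_vec r" using A y2(1) by auto
  (* y2 is an eigenvector *)
  define h where "h = S *\<^sub>v y2 - \<mu> \<cdot>\<^sub>v y2"
  have h: "h \<in> carrier_vec n" unfolding h_def using S y2(1) by auto
  have Sy2: "S *\<^sub>v y2 \<in> carrier_vec n" using S y2(1) by auto
  have hker: "scalar_prod h k = 0" if "k \<in> carrier_vec n" "A *\<^sub>v k = 0\<^sub>v r" for k
  proof -
    have "scalar_prod h k = scalar_prod (S *\<^sub>v y2) k - \<mu> * scalar_prod y2 k"
      unfolding h_def using minus_scalar_prod_distrib[OF Sy2 _ that(1), of "\<mu> \<cdot>\<^sub>v y2"] y2(1) that(1) by simp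
    also have "scalar_prod (S *\<^sub>v y2) k = scalar_prod (A *\<^sub>v y2) (A *\<^sub>v k)" by (rule f1[OF y2(1) that(1)])
    also have "\<dots> = 0" using that(2) Ay2 by simp
    finally show ?thesis using y2(3)[OF that] by simp
  qed
  have Sy2y2: "scalar_prod (S *\<^sub>v y2) y2 = \<mu>" unfolding \<mu>_def by (rule f1[OF y2(1) y2(1)])
  have y2h: "scalar_prod y2 h = 0"
  proof -
    have "scalar_prod y2 h = scalar_prod y2 (S *\<^sub>v y2) - \<mu> * scalar_prod y2 y2"
      unfolding h_def using scalar_prod_minus_distrib[OF y2(1) Sy2, of "\<mu> \<cdot>\<^sub>v y2"] y2(1) by simp
    also have "scalar_prod y2 (S *\<^sub>v y2) = \<mu>" using Sy2y2 comm_scalar_prod[OF y2(1) Sy2] by simp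
    finally show ?thesis using y2(2) by simp
  qed
  have aq: "scalar_prod (A *\<^sub>v y2) (A *\<^sub>v h) = 0"
  proof (rule quad_zero)
    fix t :: real
    define z where "z = y2 + t \<cdot>\<^sub>v h"
    have z: "z \<in> carrier_vec n" unfolding z_def using y2(1) h by auto
    have zz: "scalar_prod z z = 1 + t^2 * scalar_prod h h"
      unfolding z_def sp_expand[OF y2(1) h] y2(2) y2h by simp
    have zker: "scalar_prod z k = 0" if "k \<in> carrier_vec n" "A *\<^sub>v k = 0\<^sub>v r" for k
      unfolding z_def using add_scalar_prod_distrib[OF y2(1) _ that(1), of "t \<cdot>\<^sub>v h"] h y2(3)[OF that] hker[OF that] that(1) by simp
    have Az: "A *\<^sub>v z = A *\<^sub>v y2 + t \<cdot>\<^sub>v (A *\<^sub>v h)"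
      unfolding z_def using mult_add_distrib_mat_vec[OF A y2(1), of "t \<cdot>\<^sub>v h"] mult_mat_vec[OF A h] h by simp
    have Ah: "A *\<^sub>v h \<in> carrier_vec r" using A h by auto
    have "\<mu> * (1 + t^2 * scalar_prod h h) \<le> scalar_prod (A *\<^sub>v z) (A *\<^sub>v z)"
      using ray[OF z zker] zz by simp
    also have "\<dots> = \<mu> + 2*t * scalar_prod (A *\<^sub>v y2) (A *\<^sub>v h) + t^2 * scalar_prod (A *\<^sub>v h) (A *\<^sub>v h)"
      unfolding Az sp_expand[OF Ay2 Ah] \<mu>_def by simp
    finally show "0 \<le> 2*t * scalar_prod (A *\<^sub>v y2) (A *\<^sub>v h) + t^2 * (scalar_prod (A *\<^sub>v h) (A *\<^sub>v h) - \<mu> * scalar_prod h h)"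
      by (simp add: algebra_simps)
  qed
  have "scalar_prod h h = 0"
  proof -
    have "scalar_prod h h = scalar_prod (S *\<^sub>v y2) h - \<mu> * scalar_prod y2 h"
      using minus_scalar_prod_distrib[OF Sy2 _ h, of "\<mu> \<cdot>\<^sub>v y2"] y2(1) h unfolding h_def[symmetric] by simp
    also have "scalar_prod (S *\<^sub>v y2) h = 0" using f1[OF y2(1) h] aq by simp
    finally show ?thesis using y2h by simp
  qed
  hence "h = 0\<^sub>v n" by (rule sp_self_zero[OF h])
  hence Seig: "S *\<^sub>v y2 = \<mu> \<cdot>\<^sub>v y2"
  proof (intro eq_vecI)
    fix k assume "k < dim_vec (\<mu> \<cdot>\<^sub>v y2)"
    hence k: "k < n" using y2(1) by simp
    have "h $ k = 0" using \<open>h = 0\<^sub>v n\<close> k by simp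
    thus "(S *\<^sub>v y2) $ k = (\<mu> \<cdot>\<^sub>v y2) $ k" unfolding h_def using k Sy2 y2(1) by simp
  qed (insert S y2(1), simp)
  have y2nz: "y2 \<noteq> 0\<^sub>v n" using y2(2) by auto
  have \<mu>nz: "\<mu> \<noteq> 0"
  proof
    assume "\<mu> = 0"
    hence "A *\<^sub>v y2 = 0\<^sub>v r" using sp_self_zero[OF Ay2] unfolding \<mu>_def by simp
    hence "scalar_prod y2 y2 = 0" using y2(3)[OF y2(1)] by simp
    thus False using y2(2) by simp
  qed
  have \<mu>Ev: "\<mu> \<in> Ev" unfolding Ev_def eigenvalue_def eigenvector_def
    using S y2(1) y2nz Seig \<mu>nz by auto
  define lam where "lam = Min Ev"
  have lam: "lam \<in> Ev" "lam \<le> \<mu>" unfolding lam_def using finEv \<mu>Ev by (blast intro: Min_in, simp)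
  have lampos: "lam > 0" using f2[OF lam(1)] .
  have sig: "sigma_min A = sqrt lam" unfolding sigma_min_def lam_def Ev_def S_def by simp
  obtain y where y: "y \<in> carrier_vec n" "A *\<^sub>v y = A *\<^sub>v x0"
    "\<And>v. v\<in>carrier_vec n \<Longrightarrow> A *\<^sub>v v = A *\<^sub>v x0 \<Longrightarrow> scalar_prod y y \<le> scalar_prod v v"
    using minnorm[OF E A x0] by blast
  have yker: "scalar_prod y k = 0" if k: "k \<in> carrier_vec n" "A *\<^sub>v k = 0\<^sub>v r" for k
  proof (rule quad_zero)
    fix t :: real
    have "A *\<^sub>v (y + t \<cdot>\<^sub>v k) = A *\<^sub>v y + t \<cdot>\<^sub>v (A *\<^sub>v k)"
      using mult_add_distrib_mat_vec[OF A y(1), of "t \<cdot>\<^sub>v k"] mult_mat_vec[OF A k(1)] k(1) by simp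
    also have "\<dots> = A *\<^sub>v x0" using k(2) y(2) A x0 by auto
    finally have "scalar_prod y y \<le> scalar_prod (y + t \<cdot>\<^sub>v k) (y + t \<cdot>\<^sub>v k)"
      using y(3)[of "y + t \<cdot>\<^sub>v k"] y(1) k(1) by auto
    thus "0 \<le> 2*t * scalar_prod y k + t^2 * scalar_prod k k"
      unfolding sp_expand[OF y(1) k(1)] by simp
  qed
  have "\<mu> * scalar_prod y y \<le> scalar_prod (A *\<^sub>v x0) (A *\<^sub>v x0)"
    using ray[OF y(1) yker] y(2) by simp
  moreover have "lam * scalar_prod y y \<le> \<mu> * scalar_prod y y"
    using lam(2) sp_self_nonneg[of y] by (simp add: mult_right_mono)
  ultimately have "lam * scalar_prod y y \<le> scalar_prod (A *\<^sub>v x0) (A *\<^sub>v x0)" by linarith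
  hence "sqrt (lam * scalar_prod y y) \<le> vnorm2 (A *\<^sub>v x0)" unfolding vnorm2_sp by simp
  hence "sigma_min A * vnorm2 y \<le> vnorm2 (A *\<^sub>v x0)" unfolding sig vnorm2_sp by (simp add: real_sqrt_mult)
  thus ?thesis using sig lampos y(1,2) by auto
qed



lemma vnorm2_nonneg: "vnorm2 v \<ge> 0"
  unfolding vnorm2_def by (intro real_sqrt_ge_zero sum_nonneg, auto)

definition TS :: "nat \<Rightarrow> nat \<Rightarrow> nat \<Rightarrow> real vec \<Rightarrow> real set" where
  "TS K m p z = (\<lambda>\<Lambda>. \<Sum>i\<in>\<Lambda>. vnorm2 (block_vec p z i)) ` {\<Lambda>. \<Lambda> \<subseteq> {..<m} \<and> card \<Lambda> = m - K}"

lemma trimmed_TS: "trimmed K m p z = Min (TS K m p z)"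
  unfolding trimmed_def TS_def by (rule arg_cong[where f=Min], auto)

lemma finite_TS: "finite (TS K m p z)"
  unfolding TS_def by (rule finite_imageI, rule finite_subset[of _ "Pow {..<m}"], auto)

lemma trimmed_le:
  assumes "\<Lambda> \<subseteq> {..<m}" "card \<Lambda> = m - K"
  shows "trimmed K m p z \<le> (\<Sum>i\<in>\<Lambda>. vnorm2 (block_vec p z i))"
  unfolding trimmed_TS by (rule Min_le[OF finite_TS], insert assms, auto simp: TS_def)

lemma trimmed_attained:
  assumes "K \<le> m"
  shows "\<exists>\<Lambda>. \<Lambda> \<subseteq> {..<m} \<and> card \<Lambda> = m - K \<and> trimmed K m p z = (\<Sum>i\<in>\<Lambda>. vnorm2 (block_vec p z i))"
proof -
  have ne: "TS K m p z \<noteq> {}" unfolding TS_def by (auto intro!: exI[of _ "{..<m-K}"])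
  have "trimmed K m p z \<in> TS K m p z" unfolding trimmed_TS by (rule Min_in[OF finite_TS ne])
  thus ?thesis unfolding TS_def by auto
qed

lemma trimmed_nonneg: "K \<le> m \<Longrightarrow> trimmed K m p z \<ge> 0"
  using trimmed_attained[of K m p z] by (auto intro!: sum_nonneg simp: vnorm2_nonneg)

lemma vnorm2_block_sq: "(vnorm2 (block_vec p z i))^2 = (\<Sum>j<p. (z $ (i*p+j))^2)"
  unfolding vnorm2_def block_vec_def by (simp add: sum_nonneg)

lemma vnorm2_block_scale:
  assumes "\<And>j. j < p \<Longrightarrow> z' $ (i*p+j) = s * z $ (i*p+j)" "s \<ge> 0"
  shows "vnorm2 (block_vec p z' i) = s * vnorm2 (block_vec p z i)"
proof -
  have "(\<Sum>j<p. (z' $ (i*p+j))^2) = s^2 * (\<Sum>j<p. (z $ (i*p+j))^2)"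
    using assms(1) by (simp add: sum_distrib_left power_mult_distrib)
  thus ?thesis unfolding vnorm2_def block_vec_def using assms(2)
    by (simp add: real_sqrt_mult)
qed

definition Iset :: "nat \<Rightarrow> nat set \<Rightarrow> nat set" where
  "Iset p \<Lambda> = {i * p + j | i j. i \<in> \<Lambda> \<and> j < p}"

lemma Iset_image: "Iset p \<Lambda> = (\<lambda>(i,j). i*p+j) ` (\<Lambda> \<times> {..<p})"
  unfolding Iset_def by auto

lemma Iset_inj: "inj_on (\<lambda>(i,j). i*p+j) (\<Lambda> \<times> {..<(p::nat)})"
proof (rule inj_onI, clarify)
  fix i j i' j' :: nat assume j: "j < p" "j' < p" and e: "i*p+j = i'*p+j'"
  have "(i*p+j) div p = i" "(i*p+j) mod p = j" using j by auto
  moreover have "(i'*p+j') div p = i'" "(i'*p+j') mod p = j'" using j by auto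
  ultimately show "i = i' \<and> j = j'" using e by metis
qed

lemma sum_Iset: "(\<Sum>q\<in>Iset p \<Lambda>. f q) = (\<Sum>i\<in>\<Lambda>. \<Sum>j<p. f (i*p+j))"
proof -
  have "(\<Sum>q\<in>Iset p \<Lambda>. f q) = (\<Sum>x\<in>\<Lambda> \<times> {..<p}. f (case x of (i,j) \<Rightarrow> i*p+j))"
    unfolding Iset_image by (subst sum.reindex[OF Iset_inj], simp add: comp_def)
  also have "\<dots> = (\<Sum>(i,j)\<in>\<Lambda> \<times> {..<p}. f (i*p+j))" by (rule sum.cong, auto)
  also have "\<dots> = (\<Sum>i\<in>\<Lambda>. \<Sum>j<p. f (i*p+j))" by (rule sum.cartesian_product[symmetric])
  finally show ?thesis .
qed

lemma Iset_bound: "\<Lambda> \<subseteq> {..<m} \<Longrightarrow> q \<in> Iset p \<Lambda> \<Longrightarrow> q < m * p"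
proof -
  assume "\<Lambda> \<subseteq> {..<m}" "q \<in> Iset p \<Lambda>"
  then obtain i j where "q = i*p+j" "i < m" "j < p" unfolding Iset_def by auto
  hence "q < i*p + p" by simp
  also have "\<dots> = (i+1)*p" by simp
  also have "\<dots> \<le> m*p" using \<open>i < m\<close> by (intro mult_right_mono, auto)
  finally show ?thesis .
qed

lemma finite_Iset: "finite \<Lambda> \<Longrightarrow> finite (Iset p \<Lambda>)"
  unfolding Iset_image by auto

lemma nu_le_T:
  assumes "finite \<Lambda>"
  shows "sqrt (\<Sum>q\<in>Iset p \<Lambda>. (z $ q)^2) \<le> (\<Sum>i\<in>\<Lambda>. vnorm2 (block_vec p z i))"
proof -
  have "(\<Sum>q\<in>Iset p \<Lambda>. (z $ q)^2) = (\<Sum>i\<in>\<Lambda>. (vnorm2 (block_vec p z i))^2)"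
    unfolding sum_Iset vnorm2_block_sq ..
  hence "sqrt (\<Sum>q\<in>Iset p \<Lambda>. (z $ q)^2) = L2_set (\<lambda>i. vnorm2 (block_vec p z i)) \<Lambda>"
    unfolding L2_set_def by simp
  also have "\<dots> \<le> (\<Sum>i\<in>\<Lambda>. vnorm2 (block_vec p z i))"
    by (rule L2_set_le_sum, simp add: vnorm2_nonneg)
  finally show ?thesis .
qed

lemma pick_lessThan: "j < N \<Longrightarrow> pick {..<N} j = j"
proof -
  assume j: "j < N"
  have "{a\<in>{..<N}. a < j} = {..<j}" using j by auto
  hence "card {a\<in>{..<N}. a < j} = j" by simp
  thus ?thesis using pick_card_in_set[of j "{..<N}"] j by simp
qed

lemma pick_bij: "finite I \<Longrightarrow> bij_betw (pick I) {..<card I} I"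
proof -
  assume fin: "finite I"
  show ?thesis unfolding bij_betw_def
  proof (intro conjI)
    show "inj_on (pick I) {..<card I}"
    proof (rule inj_onI)
      fix a b assume a: "a \<in> {..<card I}" and b: "b \<in> {..<card I}" and e: "pick I a = pick I b"
      show "a = b"
      proof (cases a b rule: linorder_cases)
        case less thus ?thesis using pick_mono[of b I a] b e by auto
      next
        case greater thus ?thesis using pick_mono[of a I b] a e by auto
      qed
    qed
    show "pick I ` {..<card I} = I"
    proof
      show "pick I ` {..<card I} \<subseteq> I" using pick_in_set by auto
      show "I \<subseteq> pick I ` {..<card I}"
      proof
        fix q assume q: "q \<in> I"
        have "{a\<in>I. a < q} \<subset> I" using q by auto
        hence "card {a\<in>I. a < q} < card I" using fin by (rule psubset_card_mono[rotated])
        thus "q \<in> pick I ` {..<card I}" using pick_card_in_set[OF q] by (intro rev_image_eqI[of "card {a\<in>I. a < q}"], auto)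
      qed
    qed
  qed
qed

lemma row_blocks_eq: "row_blocks p D \<Lambda> = submatrix D (Iset p \<Lambda>) {..<dim_col D}"
  unfolding row_blocks_def Iset_def ..

lemma row_blocks_carrier:
  assumes D: "D \<in> carrier_mat (m*p) nl" and L: "\<Lambda> \<subseteq> {..<m}"
  shows "row_blocks p D \<Lambda> \<in> carrier_mat (card (Iset p \<Lambda>)) nl"
proof -
  have "\<And>q. q \<in> Iset p \<Lambda> \<Longrightarrow> q < dim_row D" using Iset_bound[OF L] D by simp
  hence rI: "{i. i < dim_row D \<and> i \<in> Iset p \<Lambda>} = Iset p \<Lambda>" by blast
  have cI: "{j. j < dim_col D \<and> j \<in> {..<dim_col D}} = {..<nl}" using D by auto
  have "dim_row (row_blocks p D \<Lambda>) = card (Iset p \<Lambda>)"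
    unfolding row_blocks_eq dim_submatrix(1) rI ..
  moreover have "dim_col (row_blocks p D \<Lambda>) = nl"
    unfolding row_blocks_eq dim_submatrix(2) cI by simp
  ultimately show ?thesis by (rule carrier_matI)
qed

lemma row_blocks_mult:
  assumes D: "D \<in> carrier_mat (m*p) nl" and L: "\<Lambda> \<subseteq> {..<m}" and v: "v \<in> carrier_vec nl"
    and k: "k < card (Iset p \<Lambda>)"
  shows "(row_blocks p D \<Lambda> *\<^sub>v v) $ k = (D *\<^sub>v v) $ (pick (Iset p \<Lambda>) k)"
proof -
  let ?I = "Iset p \<Lambda>"
  have A: "row_blocks p D \<Lambda> \<in> carrier_mat (card ?I) nl" by (rule row_blocks_carrier[OF D L])
  have "\<And>q. q \<in> ?I \<Longrightarrow> q < dim_row D" using Iset_bound[OF L] D by simp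
  hence rI: "{i. i < dim_row D \<and> i \<in> ?I} = ?I" by blast
  have cI: "{j. j < dim_col D \<and> j \<in> {..<dim_col D}} = {..<nl}" using D by auto
  have "finite \<Lambda>" using finite_subset[OF L] by simp
  hence fin: "finite ?I" by (rule finite_Iset)
  have pk: "pick ?I k < m*p" using pick_in_set[of k ?I] k Iset_bound[OF L] by auto
  have ent: "row_blocks p D \<Lambda> $$ (k,j) = D $$ (pick ?I k, j)" if "j < nl" for j
  proof -
    have "row_blocks p D \<Lambda> $$ (k,j) = D $$ (pick ?I k, pick {..<dim_col D} j)"
      unfolding row_blocks_eq
      by (rule submatrix_index, unfold rI cI, insert k that D, auto)
    thus ?thesis using pick_lessThan[of j nl] that D by simp
  qed
  have "(row_blocks p D \<Lambda> *\<^sub>v v) $ k = (\<Sum>j\<in>{0..<nl}. row_blocks p D \<Lambda> $$ (k,j) * v $ j)"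
    using A k v by (simp add: scalar_prod_def)
  also have "\<dots> = (\<Sum>j\<in>{0..<nl}. D $$ (pick ?I k, j) * v $ j)" by (rule sum.cong, auto simp: ent)
  also have "\<dots> = (D *\<^sub>v v) $ (pick ?I k)" using D pk v by (simp add: scalar_prod_def)
  finally show ?thesis .
qed

lemma sigma_K_pos_le:
  fixes E :: "nat \<Rightarrow> 'b::euclidean_space"
  assumes E: "inj_on E {..<nl}" "E ` {..<nl} \<subseteq> Basis"
    and D: "D \<in> carrier_mat (m*p) nl" and nsurj: "\<not> mat_surj D"
    and L: "\<Lambda> \<subseteq> {..<m}" "card \<Lambda> = m - K"
    and Anz: "row_blocks p D \<Lambda> \<noteq> 0\<^sub>m (card (Iset p \<Lambda>)) nl"
  shows "sigma_K K m p D > 0 \<and> sigma_K K m p D \<le> sigma_min (row_blocks p D \<Lambda>)"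
proof -
  define SS where "SS = {sigma_min (row_blocks p D \<Lambda>') | \<Lambda>'.
                  \<Lambda>' \<subseteq> {..<m} \<and> card \<Lambda>' = m - K \<and> row_blocks p D \<Lambda>' \<noteq> 0\<^sub>m (dim_row (row_blocks p D \<Lambda>')) (dim_col D)}"
  have sK: "sigma_K K m p D = Min SS" unfolding sigma_K_def SS_def using nsurj by simp
  have "SS \<subseteq> (\<lambda>\<Lambda>'. sigma_min (row_blocks p D \<Lambda>')) ` Pow {..<m}" unfolding SS_def by auto
  hence fin: "finite SS" by (rule finite_subset, simp)
  have A: "row_blocks p D \<Lambda> \<in> carrier_mat (card (Iset p \<Lambda>)) nl" by (rule row_blocks_carrier[OF D L(1)])
  have mem: "sigma_min (row_blocks p D \<Lambda>) \<in> SS" unfolding SS_def using L Anz A D by auto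
  have pos: "x > 0" if "x \<in> SS" for x
  proof -
    from that obtain \<Lambda>' where L': "\<Lambda>' \<subseteq> {..<m}" and x: "x = sigma_min (row_blocks p D \<Lambda>')"
      and nz: "row_blocks p D \<Lambda>' \<noteq> 0\<^sub>m (dim_row (row_blocks p D \<Lambda>')) (dim_col D)"
      unfolding SS_def by auto
    have A': "row_blocks p D \<Lambda>' \<in> carrier_mat (card (Iset p \<Lambda>')) nl" by (rule row_blocks_carrier[OF D L'])
    have nz': "row_blocks p D \<Lambda>' \<noteq> 0\<^sub>m (card (Iset p \<Lambda>')) nl" using nz A' D by auto
    show ?thesis using sigma_min_bound[OF E A' nz', of "0\<^sub>v nl"] x by auto
  qed
  have "Min SS \<in> SS" using fin mem by (intro Min_in, auto)
  hence "Min SS > 0" by (rule pos)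
  moreover have "Min SS \<le> sigma_min (row_blocks p D \<Lambda>)" by (rule Min_le[OF fin mem])
  ultimately show ?thesis unfolding sK by simp
qed

lemma arith_aux:
  fixes X a b cc Z t :: real
  assumes h1: "X = a + t * b - cc" and h2: "b = - Z" and h3: "Z = a - cc"
  shows "X = (1 - t) * Z"
proof -
  have e1: "t * b = - (t * Z)" using h2 by simp
  have e2: "(1 - t) * Z = Z - t * Z" by (simp add: algebra_simps)
  show ?thesis using h1 h3 e1 e2 by linarith
qed

lemma dir1:
  fixes E :: "nat \<Rightarrow> 'b::euclidean_space"
  assumes E: "inj_on E {..<nl}" "E ` {..<nl} \<subseteq> Basis"
    and D: "D \<in> carrier_mat (m*p) nl" and Dnz: "D \<noteq> 0\<^sub>m (m*p) nl" and K: "K < m"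
    and c: "c \<in> carrier_vec (m*p)" and xb: "xb \<in> carrier_vec nl" "D *\<^sub>v xb = c"
    and xl: "xl \<in> carrier_vec nl"
    and Tpos: "trimmed K m p (D *\<^sub>v xl - c) > 0"
  shows "sigma_K K m p D > 0 \<and> (\<exists>d\<in>carrier_vec nl. sigma_K K m p D * vnorm2 d \<le> trimmed K m p (D *\<^sub>v xl - c) \<and>
     (\<forall>t. 0 \<le> t \<and> t \<le> 1 \<longrightarrow> trimmed K m p (D *\<^sub>v (xl + t \<cdot>\<^sub>v d) - c) \<le> (1 - t) * trimmed K m p (D *\<^sub>v xl - c)))"
proof -
  define z where "z = D *\<^sub>v xl - c"
  have z: "z \<in> carrier_vec (m*p)" unfolding z_def using D xl c by auto
  obtain \<Lambda> where L: "\<Lambda> \<subseteq> {..<m}" "card \<Lambda> = m - K"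
     and T: "trimmed K m p z = (\<Sum>i\<in>\<Lambda>. vnorm2 (block_vec p z i))"
    using trimmed_attained[of K m p z] K by auto
  have finL: "finite \<Lambda>" using finite_subset[OF L(1)] by simp
  define I where "I = Iset p \<Lambda>"
  have finI: "finite I" unfolding I_def using finL by (rule finite_Iset)
  have Ib: "q < m*p" if "q \<in> I" for q using Iset_bound[OF L(1)] that unfolding I_def by simp
  define \<nu> where "\<nu> = sqrt (\<Sum>q\<in>I. (z $ q)^2)"
  have \<nu>T: "\<nu> \<le> trimmed K m p z" unfolding \<nu>_def T I_def by (rule nu_le_T[OF finL])
  have \<nu>pos: "\<nu> > 0"
  proof (rule ccontr)
    assume "\<not> \<nu> > 0"
    hence "(\<Sum>q\<in>I. (z $ q)^2) = 0" unfolding \<nu>_def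
      by (metis (no_types, lifting) real_sqrt_gt_zero sum_nonneg zero_le_power2 order_less_le)
    hence "(\<Sum>i\<in>\<Lambda>. (vnorm2 (block_vec p z i))^2) = 0" unfolding I_def sum_Iset vnorm2_block_sq .
    hence "\<forall>i\<in>\<Lambda>. (vnorm2 (block_vec p z i))^2 = 0" using finL by (subst (asm) sum_nonneg_eq_0_iff, auto)
    hence "trimmed K m p z = 0" unfolding T by simp
    thus False using Tpos unfolding z_def by simp
  qed
  have C: "sigma_K K m p D > 0 \<and> (\<exists>d\<in>carrier_vec nl. sigma_K K m p D * vnorm2 d \<le> \<nu> \<and> (\<forall>q\<in>I. (D *\<^sub>v d) $ q = - z $ q))"
  proof (cases "mat_surj D")
    case True
    define w where "w = vec (m*p) (\<lambda>q. if q \<in> I then - z $ q else 0)"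
    have w: "w \<in> carrier_vec (m*p)" unfolding w_def by simp
    obtain x0 where x0: "x0 \<in> carrier_vec nl" "D *\<^sub>v x0 = w"
      using True w D unfolding mat_surj_def by auto
    obtain d where d: "d \<in> carrier_vec nl" "D *\<^sub>v d = w" "sigma_min D * vnorm2 d \<le> vnorm2 w"
      and sp: "sigma_min D > 0"
      using sigma_min_bound[OF E D Dnz x0(1)] x0(2) by auto
    have "(\<Sum>q<m*p. (w $ q)^2) = (\<Sum>q\<in>I. (z $ q)^2)"
    proof -
      have "(\<Sum>q<m*p. (w $ q)^2) = (\<Sum>q<m*p. if q \<in> I then (z $ q)^2 else 0)"
        by (rule sum.cong, auto simp: w_def)
      also have "\<dots> = (\<Sum>q\<in>{..<m*p} \<inter> I. (z $ q)^2)" by (simp add: sum.inter_restrict)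
      also have "{..<m*p} \<inter> I = I" using Ib by auto
      finally show ?thesis .
    qed
    hence "vnorm2 w = \<nu>" unfolding vnorm2_def \<nu>_def using w by simp
    moreover have "sigma_K K m p D = sigma_min D" unfolding sigma_K_def using True by simp
    moreover have "(D *\<^sub>v d) $ q = - z $ q" if "q \<in> I" for q
      using d(2) that Ib[OF that] unfolding w_def by simp
    ultimately show ?thesis using d sp by auto
  next
    case False
    define A where "A = row_blocks p D \<Lambda>"
    have A: "A \<in> carrier_mat (card I) nl" unfolding A_def I_def by (rule row_blocks_carrier[OF D L(1)])
    define x0 where "x0 = xb - xl"
    have x0: "x0 \<in> carrier_vec nl" unfolding x0_def using xb xl by auto
    have Ax0: "(A *\<^sub>v x0) $ k = - z $ (pick I k)" if k: "k < card I" for k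
    proof -
      have pk: "pick I k \<in> I" using pick_in_set[of k I] k by simp
      have "(A *\<^sub>v x0) $ k = (D *\<^sub>v x0) $ (pick I k)" unfolding A_def I_def
        by (rule row_blocks_mult[OF D L(1) x0], insert k, simp add: I_def)
      also have "D *\<^sub>v x0 = D *\<^sub>v xb - D *\<^sub>v xl" unfolding x0_def by (rule mult_minus_distrib_mat_vec[OF D xb(1) xl])
      also have "(D *\<^sub>v xb - D *\<^sub>v xl) $ (pick I k) = - z $ (pick I k)"
        unfolding z_def xb(2) using Ib[OF pk] D xl c by simp
      finally show ?thesis .
    qed
    have pb: "bij_betw (pick I) {..<card I} I" by (rule pick_bij[OF finI])
    have nAx0: "vnorm2 (A *\<^sub>v x0) = \<nu>"
    proof -
      have "(\<Sum>k<card I. ((A *\<^sub>v x0) $ k)^2) = (\<Sum>k<card I. (z $ (pick I k))^2)"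
        by (rule sum.cong, auto simp: Ax0)
      also have "\<dots> = (\<Sum>q\<in>I. (z $ q)^2)"
        using sum.reindex_bij_betw[OF pb, of "\<lambda>q. (z $ q)^2"] by simp
      finally show ?thesis unfolding vnorm2_def \<nu>_def using A by simp
    qed
    have Anz: "A \<noteq> 0\<^sub>m (card I) nl"
    proof
      assume "A = 0\<^sub>m (card I) nl"
      hence "A *\<^sub>v x0 = 0\<^sub>v (card I)" using x0 by auto
      hence "vnorm2 (A *\<^sub>v x0) = 0" unfolding vnorm2_def by simp
      thus False using nAx0 \<nu>pos by simp
    qed
    obtain d where d: "d \<in> carrier_vec nl" "A *\<^sub>v d = A *\<^sub>v x0" "sigma_min A * vnorm2 d \<le> vnorm2 (A *\<^sub>v x0)"
      using sigma_min_bound[OF E A Anz x0] by auto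
    have sK: "sigma_K K m p D > 0 \<and> sigma_K K m p D \<le> sigma_min A"
      unfolding A_def by (rule sigma_K_pos_le[OF E D False L], fold A_def I_def, rule Anz)
    have "sigma_K K m p D * vnorm2 d \<le> sigma_min A * vnorm2 d"
      using sK vnorm2_nonneg[of d] by (simp add: mult_right_mono)
    hence b: "sigma_K K m p D * vnorm2 d \<le> \<nu>" using d(3) nAx0 by simp
    have "(D *\<^sub>v d) $ q = - z $ q" if q: "q \<in> I" for q
    proof -
      define k where "k = card {a\<in>I. a < q}"
      have kq: "pick I k = q" unfolding k_def by (rule pick_card_in_set[OF q])
      have "{a\<in>I. a < q} \<subset> I" using q by auto
      hence k: "k < card I" unfolding k_def using finI by (rule psubset_card_mono[rotated])
      have "(D *\<^sub>v d) $ q = (A *\<^sub>v d) $ k" unfolding A_def kq[symmetric]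
        using row_blocks_mult[OF D L(1) d(1), of k] k unfolding I_def by simp
      also have "\<dots> = - z $ q" using Ax0[OF k] d(2) kq by simp
      finally show ?thesis .
    qed
    thus ?thesis using sK b d(1) by auto
  qed
  then obtain d where sKpos: "sigma_K K m p D > 0" and d: "d \<in> carrier_vec nl" "sigma_K K m p D * vnorm2 d \<le> \<nu>"
    "\<And>q. q\<in>I \<Longrightarrow> (D *\<^sub>v d) $ q = - z $ q" by auto
  have decr: "trimmed K m p (D *\<^sub>v (xl + t \<cdot>\<^sub>v d) - c) \<le> (1 - t) * trimmed K m p z" if t: "0 \<le> t" "t \<le> 1" for t
  proof -
    define z' where "z' = D *\<^sub>v (xl + t \<cdot>\<^sub>v d) - c"
    have eqD: "D *\<^sub>v (xl + t \<cdot>\<^sub>v d) = D *\<^sub>v xl + t \<cdot>\<^sub>v (D *\<^sub>v d)"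
      using mult_add_distrib_mat_vec[OF D xl, of "t \<cdot>\<^sub>v d"] mult_mat_vec[OF D d(1)] d(1) by simp
    have z'q: "z' $ q = (1 - t) * z $ q" if q: "q \<in> I" for q
    proof -
      have zq: "z $ q = (D *\<^sub>v xl) $ q - c $ q" unfolding z_def using Ib[OF q] D xl c
        by (simp del: index_mult_mat_vec)
      have z'q1: "z' $ q = (D *\<^sub>v xl) $ q + t * (D *\<^sub>v d) $ q - c $ q"
        unfolding z'_def eqD using Ib[OF q] D xl c d(1) by (simp del: index_mult_mat_vec)
      show ?thesis using arith_aux[OF z'q1 d(3)[OF q] zq] .
    qed
    have blk: "vnorm2 (block_vec p z' i) = (1 - t) * vnorm2 (block_vec p z i)" if i: "i \<in> \<Lambda>" for i
      by (rule vnorm2_block_scale, rule z'q, insert i t, auto simp: I_def Iset_def)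
    have "trimmed K m p z' \<le> (\<Sum>i\<in>\<Lambda>. vnorm2 (block_vec p z' i))" by (rule trimmed_le[OF L])
    also have "\<dots> = (1 - t) * trimmed K m p z" unfolding T by (simp add: blk sum_distrib_left)
    finally show ?thesis unfolding z'_def .
  qed
  have "sigma_K K m p D * vnorm2 d \<le> trimmed K m p z" using d(2) \<nu>T by linarith
  thus ?thesis using sKpos d(1) decr unfolding z_def by blast
qed



lemma vnorm2_block1: "i < dim_vec z \<Longrightarrow> vnorm2 (block_vec 1 z i) = \<bar>z $ i\<bar>"
  unfolding vnorm2_def block_vec_def by simp

lemma dir2:
  assumes K: "K < m" and xl: "xl \<in> carrier_vec m"
    and Tpos: "trimmed K m 1 xl > 0"
  shows "\<exists>i<m. \<exists>d\<in>carrier_vec m. (\<forall>j<m. d $ j = (if j = i then - sgn (xl $ i) else 0)) \<and> xl $ i \<noteq> 0 \<and>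
     (\<forall>t. 0 \<le> t \<and> t \<le> \<bar>xl $ i\<bar> \<longrightarrow> trimmed K m 1 (xl + t \<cdot>\<^sub>v d) \<le> trimmed K m 1 xl - t)"
proof -
  obtain \<Lambda> where L: "\<Lambda> \<subseteq> {..<m}" "card \<Lambda> = m - K"
     and T: "trimmed K m 1 xl = (\<Sum>j\<in>\<Lambda>. vnorm2 (block_vec 1 xl j))"
    using trimmed_attained[of K m 1 xl] K by auto
  have finL: "finite \<Lambda>" using finite_subset[OF L(1)] by simp
  have T': "trimmed K m 1 xl = (\<Sum>j\<in>\<Lambda>. \<bar>xl $ j\<bar>)"
    unfolding T using L(1) xl by (intro sum.cong refl vnorm2_block1, auto)
  obtain i where i: "i \<in> \<Lambda>" "xl $ i \<noteq> 0"
  proof -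
    { assume "\<forall>j\<in>\<Lambda>. xl $ j = 0"
      hence "trimmed K m 1 xl = 0" unfolding T' by simp }
    thus ?thesis using that Tpos by force
  qed
  have im: "i < m" using i L by auto
  define d where "d = vec m (\<lambda>j. if j = i then - sgn (xl $ i) else (0::real))"
  have d: "d \<in> carrier_vec m" unfolding d_def by simp
  have dec: "trimmed K m 1 (xl + t \<cdot>\<^sub>v d) \<le> trimmed K m 1 xl - t" if t: "0 \<le> t" "t \<le> \<bar>xl $ i\<bar>" for t
  proof -
    let ?z = "xl + t \<cdot>\<^sub>v d"
    have zj: "\<bar>?z $ j\<bar> = (if j = i then \<bar>xl $ i\<bar> - t else \<bar>xl $ j\<bar>)" if j: "j < m" for j
    proof (cases "j = i")
      case True
      have "?z $ j = xl $ i - t * sgn (xl $ i)" using True j xl unfolding d_def by simp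
      moreover have "\<bar>xl $ i - t * sgn (xl $ i)\<bar> = \<bar>xl $ i\<bar> - t" using t i(2)
        by (cases "xl $ i > 0", auto simp: sgn_if)
      ultimately show ?thesis using True by simp
    next
      case False thus ?thesis using j xl unfolding d_def by simp
    qed
    have "trimmed K m 1 ?z \<le> (\<Sum>j\<in>\<Lambda>. vnorm2 (block_vec 1 ?z j))" by (rule trimmed_le[OF L])
    also have "\<dots> = (\<Sum>j\<in>\<Lambda>. (if j = i then \<bar>xl $ i\<bar> - t else \<bar>xl $ j\<bar>))"
    proof (rule sum.cong[OF refl])
      fix j assume j: "j \<in> \<Lambda>"
      hence jm: "j < m" using L(1) by auto
      have "vnorm2 (block_vec 1 ?z j) = \<bar>?z $ j\<bar>" by (rule vnorm2_block1, insert jm xl d, simp)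
      thus "vnorm2 (block_vec 1 ?z j) = (if j = i then \<bar>xl $ i\<bar> - t else \<bar>xl $ j\<bar>)" using zj[OF jm] by simp
    qed
    also have "\<dots> = (\<Sum>j\<in>\<Lambda>. \<bar>xl $ j\<bar>) - t"
    proof -
      have "(\<Sum>j\<in>\<Lambda>. (if j = i then \<bar>xl $ i\<bar> - t else \<bar>xl $ j\<bar>)) = (\<Sum>j\<in>\<Lambda>. \<bar>xl $ j\<bar> - (if j = i then t else 0))"
        by (rule sum.cong, auto)
      also have "\<dots> = (\<Sum>j\<in>\<Lambda>. \<bar>xl $ j\<bar>) - t" using finL i(1) by (simp add: sum_subtractf)
      finally show ?thesis .
    qed
    finally show ?thesis unfolding T' .
  qed
  show ?thesis using im d i(2) dec by (intro exI[of _ i] conjI bexI[of _ d], auto simp: d_def)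
qed

lemma vnorm2_L2: "vnorm2 v = L2_set (\<lambda>i. v $ i) {..<dim_vec v}"
  unfolding vnorm2_def L2_set_def ..

lemma cauchy_schwarz_vec:
  assumes "dim_vec u = dim_vec v"
  shows "scalar_prod u v \<le> vnorm2 u * vnorm2 v"
proof -
  have "scalar_prod u v = (\<Sum>i<dim_vec v. u $ i * v $ i)" unfolding scalar_prod_def by (simp add: atLeast0LessThan)
  also have "\<dots> \<le> (\<Sum>i<dim_vec v. \<bar>u $ i\<bar> * \<bar>v $ i\<bar>)"
    by (rule sum_mono, simp add: abs_mult[symmetric])
  also have "\<dots> \<le> L2_set (\<lambda>i. u $ i) {..<dim_vec v} * L2_set (\<lambda>i. v $ i) {..<dim_vec v}"
    by (rule L2_set_mult_ineq)
  finally show ?thesis unfolding vnorm2_L2 using assms by simp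
qed

lemma vnorm2_triangle:
  assumes "dim_vec u = dim_vec v"
  shows "vnorm2 u \<le> vnorm2 v + vnorm2 (u - v)"
proof -
  have "vnorm2 u = L2_set (\<lambda>i. v $ i + (u - v) $ i) {..<dim_vec v}"
    unfolding vnorm2_L2 using assms by (intro L2_set_cong, auto)
  also have "\<dots> \<le> L2_set (\<lambda>i. v $ i) {..<dim_vec v} + L2_set (\<lambda>i. (u - v) $ i) {..<dim_vec v}"
    by (rule L2_set_triangle_ineq)
  finally show ?thesis unfolding vnorm2_L2 using assms by simp
qed

lemma vnorm_inf_ge: "i < dim_vec v \<Longrightarrow> \<bar>v $ i\<bar> \<le> vnorm_inf v"
  unfolding vnorm_inf_def by (rule Max_ge, auto)

lemma neg_sgn_le: "- (a::real) * sgn b \<le> \<bar>a\<bar>"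
  by (cases "b > 0"; cases "b < 0", auto simp: sgn_if)

lemma final_arith1:
  fixes g T s B nd sg :: real
  assumes "g * T \<le> s" "s \<le> B * nd" "sg * nd \<le> T" "B \<ge> 0" "sg > 0" "T > 0" "g > B / sg" "nd \<ge> 0" "g > 0"
  shows False
proof -
  have gs: "g * sg > B" using assms(5,7) by (simp add: divide_less_eq)
  show False
  proof (cases "nd > 0")
    case True
    have "B * nd < g * sg * nd" using gs True by simp
    also have "\<dots> \<le> g * T" using assms(3,9) by (simp add: mult.assoc)
    finally show False using assms(1,2) by linarith
  next
    case False
    hence "nd = 0" using assms(8) by simp
    moreover have "g * T > 0" using assms(6,9) by simp
    ultimately show False using assms(1,2) by simp
  qed
qed

theorem mainTheorem5:
  fixes L :: nat
    and n m p K :: "nat \<Rightarrow> nat"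
    and e :: "nat \<Rightarrow> nat \<Rightarrow> 'a::euclidean_space"
    and f :: "'a \<Rightarrow> real" and g :: "'a \<Rightarrow> 'a" and M :: real
    and \<gamma> C :: "nat \<Rightarrow> real"
    and D :: "nat \<Rightarrow> real mat" and c :: "nat \<Rightarrow> real vec"
    and xs :: 'a
  assumes blocks: "bij_betw (\<lambda>(l, i). e l i) {(l, i). l \<le> L \<and> i < n l} Basis"
    and smooth: "M_smooth_grad f g M"
    and gamma_pos: "\<forall>l \<in> {1..L}. \<gamma> l > 0"
    and K_lt: "\<forall>l \<in> {1..L}. K l < m l"
    and D_dim: "\<forall>l \<in> {1..L}. D l \<in> carrier_mat (m l * p l) (n l)"
    and D_nz: "\<forall>l \<in> {1..L}. D l \<noteq> 0\<^sub>m (m l * p l) (n l)"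
    and c_dim: "\<forall>l \<in> {1..L}. c l \<in> carrier_vec (m l * p l)"
    and feasible: "\<forall>l \<in> {1..L}. \<exists>xb \<in> carrier_vec (n l). D l *\<^sub>v xb = c l"
    and dstat: "d_stationary
                  (\<lambda>x. f x + (\<Sum>l=1..L. \<gamma> l * trimmed (K l) (m l) (p l) (D l *\<^sub>v blk e n l x - c l)))
                  xs"
    and C_pos: "\<forall>l \<le> L. C l > 0"
    and C_bound: "\<forall>l \<le> L. vnorm2 (blk e n l xs) \<le> C l"
    and gamma_large: "\<forall>l \<in> {1..L}.
          \<gamma> l > (vnorm2 (blk e n l (g 0)) + M * sqrt (\<Sum>k\<le>L. (C k)\<^sup>2)) / sigma_K (K l) (m l) (p l) (D l)
          \<or> (p l = 1 \<and> D l = 1\<^sub>m (n l) \<and> c l = 0\<^sub>v (n l) \<and>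
             \<gamma> l > vnorm_inf (blk e n l (g 0)) + M * sqrt (\<Sum>k\<le>L. (C k)\<^sup>2))"
  shows "\<forall>l \<in> {1..L}. trimmed (K l) (m l) (p l) (D l *\<^sub>v blk e n l xs - c l) = 0"
proof (rule ballI)
  fix l assume l: "l \<in> {1..L}"
  note bij = blocks
  have inj: "inj_on (\<lambda>(l, i). e l i) {(l, i). l \<le> L \<and> i < n l}" using bij by (simp add: bij_betw_def)
  have img: "(\<lambda>(l, i). e l i) ` {(l, i). l \<le> L \<and> i < n l} = Basis" using bij by (simp add: bij_betw_def)
  have eB: "e k i \<in> Basis" if "k \<le> L" "i < n k" for k i using img that by blast
  have eeq: "e k i = e k' i' \<longleftrightarrow> k = k' \<and> i = i'" if "k \<le> L" "i < n k" "k' \<le> L" "i' < n k'" for k i k' i'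
    using inj_onD[OF inj, of "(k,i)" "(k',i')"] that by auto
  have eorth: "inner (e k i) (e k' i') = (if k = k' \<and> i = i' then 1 else 0)"
    if "k \<le> L" "i < n k" "k' \<le> L" "i' < n k'" for k i k' i'
    using inner_Basis[OF eB[OF that(1,2)] eB[OF that(3,4)]] eeq[OF that] by simp
  have El: "inj_on (e k) {..<n k}" "e k ` {..<n k} \<subseteq> Basis" if "k \<le> L" for k
    using eeq that eB by (auto intro!: inj_onI)
  have lL: "l \<le> L" "1 \<le> l" using l by auto
  have fder: "\<And>x. (f has_derivative (\<lambda>h. inner (g x) h)) (at x)"
    and lip: "\<And>x y. norm (g x - g y) \<le> M * norm (x - y)"
    using smooth unfolding M_smooth_grad_def by auto
  have M0: "M \<ge> 0"
  proof -
    obtain b :: 'a where b: "b \<in> Basis" using nonempty_Basis by blast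
    have "0 \<le> norm (g b - g 0)" by simp
    also have "\<dots> \<le> M * norm (b - 0)" by (rule lip)
    finally show ?thesis using b by simp
  qed
  define S where "S = sqrt (\<Sum>k\<le>L. (C k)\<^sup>2)"
  have blk_sq: "(vnorm2 (blk e n k x))^2 = (\<Sum>i<n k. (inner x (e k i))^2)" for k x
    unfolding vnorm2_def blk_def by (simp add: sum_nonneg)
  have nsq: "(norm x)^2 = (\<Sum>k\<le>L. (vnorm2 (blk e n k x))^2)" for x
  proof -
    have "(\<Sum>b\<in>Basis. (inner x b)^2) = inner x x" by (simp add: euclidean_inner[of x x] power2_eq_square)
    hence "(norm x)^2 = (\<Sum>b\<in>Basis. (inner x b)^2)" by (simp add: power2_norm_eq_inner)
    also have "\<dots> = (\<Sum>(k,i)\<in>{(l, i). l \<le> L \<and> i < n l}. (inner x (e k i))^2)"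
      using sum.reindex_bij_betw[OF bij, of "\<lambda>b. (inner x b)^2", symmetric] by (simp add: case_prod_unfold)
    also have "{(l, i). l \<le> L \<and> i < n l} = Sigma {..L} (\<lambda>k. {..<n k})" by auto
    also have "(\<Sum>(k,i)\<in>Sigma {..L} (\<lambda>k. {..<n k}). (inner x (e k i))^2) = (\<Sum>k\<le>L. \<Sum>i<n k. (inner x (e k i))^2)"
      by (rule sum.Sigma[symmetric], auto)
    finally show ?thesis unfolding blk_sq .
  qed
  have nxs: "norm xs \<le> S"
  proof -
    have "(norm xs)^2 \<le> (\<Sum>k\<le>L. (C k)^2)" unfolding nsq
      by (rule sum_mono, rule power_mono, insert C_bound, auto simp: vnorm2_nonneg)
    hence "sqrt ((norm xs)^2) \<le> S" unfolding S_def by (rule real_sqrt_le_mono)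
    thus ?thesis by simp
  qed
  have S0: "S \<ge> 0" unfolding S_def by (intro real_sqrt_ge_zero sum_nonneg, auto)
  have blk_le: "vnorm2 (blk e n k v) \<le> norm v" if "k \<le> L" for k v
  proof -
    have "(vnorm2 (blk e n k v))^2 \<le> (norm v)^2" unfolding blk_sq by (rule bessel[OF El[OF that]])
    thus ?thesis by (rule power2_le_imp_le, simp)
  qed
  have blk_diff: "blk e n k (a - b) = blk e n k a - blk e n k b" for k a b
    unfolding blk_def by (intro eq_vecI, auto simp: inner_diff_left)
  have blk_carrier: "blk e n k x \<in> carrier_vec (n k)" for k x unfolding blk_def by simp
  have gdiff: "norm (g xs - g 0) \<le> M * S"
  proof -
    have "norm (g xs - g 0) \<le> M * norm (xs - 0)" by (rule lip)
    also have "\<dots> \<le> M * S" using nxs M0 by (simp add: mult_left_mono)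
    finally show ?thesis .
  qed
  have gbound: "vnorm2 (blk e n l (g xs)) \<le> vnorm2 (blk e n l (g 0)) + M * S"
  proof -
    have "vnorm2 (blk e n l (g xs)) \<le> vnorm2 (blk e n l (g 0)) + vnorm2 (blk e n l (g xs) - blk e n l (g 0))"
      by (rule vnorm2_triangle, simp add: blk_def)
    also have "blk e n l (g xs) - blk e n l (g 0) = blk e n l (g xs - g 0)" by (simp add: blk_diff)
    also have "vnorm2 \<dots> \<le> M * S" using blk_le[OF lL(1)] gdiff order_trans by blast
    finally show ?thesis by simp
  qed
  define Tl where "Tl = (\<lambda>x. trimmed (K l) (m l) (p l) (D l *\<^sub>v blk e n l x - c l))"
  define F where "F = (\<lambda>x. f x + (\<Sum>l=1..L. \<gamma> l * trimmed (K l) (m l) (p l) (D l *\<^sub>v blk e n l x - c l)))"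
  have G: "scalar_prod (blk e n l (g xs)) d \<ge> \<gamma> l * \<beta>"
    if d: "d \<in> carrier_vec (n l)" and \<delta>: "\<delta> > 0"
      and dec: "\<And>t. 0 < t \<Longrightarrow> t < \<delta> \<Longrightarrow> trimmed (K l) (m l) (p l) (D l *\<^sub>v (blk e n l xs + t \<cdot>\<^sub>v d) - c l) \<le> Tl xs - t * \<beta>"
    for d \<beta> \<delta>
  proof -
    define dd where "dd = emb (e l) (n l) d"
    have dd_inner: "inner dd (e k j) = (if k = l then d $ j else 0)" if "k \<le> L" "j < n k" for k j
    proof (cases "k = l")
      case True thus ?thesis using emb_inner[OF El[OF lL(1)], of j d] that unfolding dd_def by simp
    next
      case False
      have "inner dd (e k j) = (\<Sum>i<n l. d $ i * inner (e l i) (e k j))" unfolding dd_def emb_def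
        by (simp add: inner_sum_left)
      also have "\<dots> = 0" using eorth[OF lL(1) _ that] False by simp
      finally show ?thesis using False by simp
    qed
    have blk_shift: "blk e n k (xs + t *\<^sub>R dd) = (if k = l then blk e n l xs + t \<cdot>\<^sub>v d else blk e n k xs)"
      if "k \<le> L" for k t
      using that d unfolding blk_def by (intro eq_vecI, auto simp: inner_add_left dd_inner)
    have Fdiff: "F (xs + t *\<^sub>R dd) - F xs = f (xs + t *\<^sub>R dd) - f xs +
        \<gamma> l * (trimmed (K l) (m l) (p l) (D l *\<^sub>v (blk e n l xs + t \<cdot>\<^sub>v d) - c l) - Tl xs)" for t
    proof -
      let ?h = "\<lambda>k x. \<gamma> k * trimmed (K k) (m k) (p k) (D k *\<^sub>v blk e n k x - c k)"
      have "(\<Sum>k=1..L. ?h k (xs + t *\<^sub>R dd)) - (\<Sum>k=1..L. ?h k xs) = (\<Sum>k=1..L. ?h k (xs + t *\<^sub>R dd) - ?h k xs)"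
        by (simp add: sum_subtractf)
      also have "\<dots> = (\<Sum>k=1..L. if k = l then \<gamma> l * (trimmed (K l) (m l) (p l) (D l *\<^sub>v (blk e n l xs + t \<cdot>\<^sub>v d) - c l) - Tl xs) else 0)"
        by (rule sum.cong, auto simp: blk_shift Tl_def algebra_simps)
      also have "\<dots> = \<gamma> l * (trimmed (K l) (m l) (p l) (D l *\<^sub>v (blk e n l xs + t \<cdot>\<^sub>v d) - c l) - Tl xs)"
        using l by simp
      finally show ?thesis unfolding F_def by simp
    qed
    obtain D0 where D0: "has_dir_deriv F xs dd D0" "D0 \<ge> 0"
      using dstat unfolding d_stationary_def F_def by blast
    have limF: "((\<lambda>t. (F (xs + t *\<^sub>R dd) - F xs) / t) \<longlongrightarrow> D0) (at_right 0)"
      using D0(1) unfolding has_dir_deriv_def .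
    have "((\<lambda>t. xs + t *\<^sub>R dd) has_derivative (\<lambda>t. t *\<^sub>R dd)) (at 0)"
      by (auto intro!: derivative_eq_intros)
    from diff_chain_at[OF this fder[of "xs + 0 *\<^sub>R dd"]]
    have "((f \<circ> (\<lambda>t. xs + t *\<^sub>R dd)) has_derivative ((\<lambda>h. inner (g xs) h) \<circ> (\<lambda>t. t *\<^sub>R dd))) (at 0)"
      by simp
    moreover have "((\<lambda>h. inner (g xs) h) \<circ> (\<lambda>t. t *\<^sub>R dd)) = (\<lambda>t. inner (g xs) dd * t)"
      by (auto simp: fun_eq_iff)
    ultimately have hd: "((\<lambda>t. f (xs + t *\<^sub>R dd)) has_derivative (\<lambda>t. inner (g xs) dd * t)) (at 0)"
      by (simp add: comp_def)
    have "(\<lambda>t. inner (g xs) dd * t) = (*) (inner (g xs) dd)" by (rule ext, simp)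
    with hd have "((\<lambda>t. f (xs + t *\<^sub>R dd)) has_field_derivative inner (g xs) dd) (at 0)"
      unfolding has_field_derivative_def by simp
    hence "((\<lambda>t. (f (xs + t *\<^sub>R dd) - f (xs + 0 *\<^sub>R dd)) / (t - 0)) \<longlongrightarrow> inner (g xs) dd) (at 0)"
      by (simp add: has_field_derivative_iff)
    hence limf0: "((\<lambda>t. (f (xs + t *\<^sub>R dd) - f xs) / t) \<longlongrightarrow> inner (g xs) dd) (at 0)" by simp
    have limf: "((\<lambda>t. (f (xs + t *\<^sub>R dd) - f xs) / t - \<gamma> l * \<beta>) \<longlongrightarrow> inner (g xs) dd - \<gamma> l * \<beta>) (at_right 0)"
      by (intro tendsto_intros tendsto_mono[OF at_le[OF subset_UNIV] limf0])
    have ev: "eventually (\<lambda>t. (F (xs + t *\<^sub>R dd) - F xs) / t \<le> (f (xs + t *\<^sub>R dd) - f xs) / t - \<gamma> l * \<beta>) (at_right 0)"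
    proof -
      have "eventually (\<lambda>t. t \<in> {0<..<\<delta>}) (at_right (0::real))" by (rule eventually_at_right_real[OF \<delta>])
      thus ?thesis
      proof (rule eventually_mono)
        fix t :: real assume t: "t \<in> {0<..<\<delta>}"
        have gp: "\<gamma> l > 0" using gamma_pos l by auto
        have "\<gamma> l * (trimmed (K l) (m l) (p l) (D l *\<^sub>v (blk e n l xs + t \<cdot>\<^sub>v d) - c l) - Tl xs) \<le> \<gamma> l * (- (t * \<beta>))"
          using dec[of t] t gp by (intro mult_left_mono, auto)
        hence "F (xs + t *\<^sub>R dd) - F xs \<le> (f (xs + t *\<^sub>R dd) - f xs) - t * (\<gamma> l * \<beta>)"
          unfolding Fdiff by (simp add: algebra_simps)
        hence "(F (xs + t *\<^sub>R dd) - F xs) / t \<le> ((f (xs + t *\<^sub>R dd) - f xs) - t * (\<gamma> l * \<beta>)) / t"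
          using t by (intro divide_right_mono, auto)
        also have "\<dots> = (f (xs + t *\<^sub>R dd) - f xs) / t - \<gamma> l * \<beta>" using t by (simp add: field_simps)
        finally show "(F (xs + t *\<^sub>R dd) - F xs) / t \<le> (f (xs + t *\<^sub>R dd) - f xs) / t - \<gamma> l * \<beta>" .
      qed
    qed
    have "D0 \<le> inner (g xs) dd - \<gamma> l * \<beta>"
      by (rule tendsto_le[OF trivial_limit_at_right_real limf limF ev])
    moreover have "inner (g xs) dd = scalar_prod (blk e n l (g xs)) d"
    proof -
      have "inner (g xs) dd = (\<Sum>i<n l. d $ i * inner (g xs) (e l i))" unfolding dd_def emb_def
        by (simp add: inner_sum_right)
      also have "\<dots> = scalar_prod (blk e n l (g xs)) d" unfolding scalar_prod_def blk_def using d
        by (auto simp: atLeast0LessThan mult.commute intro: sum.cong)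
      finally show ?thesis .
    qed
    ultimately show ?thesis using D0(2) by linarith
  qed
  have Kl: "K l < m l" using K_lt l by auto
  have T0: "Tl xs \<ge> 0" unfolding Tl_def by (rule trimmed_nonneg, insert Kl, simp)
  show "trimmed (K l) (m l) (p l) (D l *\<^sub>v blk e n l xs - c l) = 0"
  proof (rule ccontr)
    assume "trimmed (K l) (m l) (p l) (D l *\<^sub>v blk e n l xs - c l) \<noteq> 0"
    hence Tpos: "Tl xs > 0" using T0 unfolding Tl_def by simp
    have gp: "\<gamma> l > 0" using gamma_pos l by auto
    from gamma_large l consider
      (A) "\<gamma> l > (vnorm2 (blk e n l (g 0)) + M * sqrt (\<Sum>k\<le>L. (C k)\<^sup>2)) / sigma_K (K l) (m l) (p l) (D l)"
      | (B) "p l = 1" "D l = 1\<^sub>m (n l)" "c l = 0\<^sub>v (n l)"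
            "\<gamma> l > vnorm_inf (blk e n l (g 0)) + M * sqrt (\<Sum>k\<le>L. (C k)\<^sup>2)"
      by blast
    thus False
    proof cases
      case A
      have Dl: "D l \<in> carrier_mat (m l * p l) (n l)" using D_dim l by auto
      have Dnz: "D l \<noteq> 0\<^sub>m (m l * p l) (n l)" using D_nz l by auto
      have cl: "c l \<in> carrier_vec (m l * p l)" using c_dim l by auto
      obtain xb where xb: "xb \<in> carrier_vec (n l)" "D l *\<^sub>v xb = c l" using feasible l by blast
      from dir1[OF El[OF lL(1)] Dl Dnz Kl cl xb blk_carrier Tpos[unfolded Tl_def]]
      obtain d where sp: "sigma_K (K l) (m l) (p l) (D l) > 0" and d: "d \<in> carrier_vec (n l)"
        "sigma_K (K l) (m l) (p l) (D l) * vnorm2 d \<le> Tl xs"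
        "\<And>t. 0 \<le> t \<Longrightarrow> t \<le> 1 \<Longrightarrow> trimmed (K l) (m l) (p l) (D l *\<^sub>v (blk e n l xs + t \<cdot>\<^sub>v d) - c l) \<le> (1 - t) * Tl xs"
        unfolding Tl_def by blast
      have "scalar_prod (blk e n l (g xs)) d \<ge> \<gamma> l * Tl xs"
        by (rule G[OF d(1), of 1], simp, insert d(3), auto simp: algebra_simps)
      moreover have "scalar_prod (blk e n l (g xs)) d \<le> vnorm2 (blk e n l (g xs)) * vnorm2 d"
        by (rule cauchy_schwarz_vec, insert d(1), simp add: blk_def)
      moreover have "vnorm2 (blk e n l (g xs)) * vnorm2 d \<le> (vnorm2 (blk e n l (g 0)) + M * S) * vnorm2 d"
        using gbound vnorm2_nonneg[of d] by (rule mult_right_mono)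
      ultimately show False
        using final_arith1[of "\<gamma> l" "Tl xs" _ "vnorm2 (blk e n l (g 0)) + M * S" "vnorm2 d" "sigma_K (K l) (m l) (p l) (D l)"]
          d(2) sp Tpos A gp vnorm2_nonneg[of d] vnorm2_nonneg[of "blk e n l (g 0)"] M0 S0 unfolding S_def
        by (smt (verit) mult_nonneg_nonneg)
    next
      case B
      have Dl: "D l \<in> carrier_mat (m l * p l) (n l)" using D_dim l by auto
      hence mn: "m l = n l" using B by auto
      have xl: "blk e n l xs \<in> carrier_vec (m l)" using blk_carrier mn by simp
      have simpT: "D l *\<^sub>v (v::real vec) - c l = v" if "v \<in> carrier_vec (n l)" for v
        using that B by auto
      have Tpos': "trimmed (K l) (m l) 1 (blk e n l xs) > 0"
        using Tpos unfolding Tl_def simpT[OF blk_carrier] B(1) .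
      from dir2[OF Kl xl Tpos']
      obtain i d where i: "i < m l" and d: "d \<in> carrier_vec (m l)"
        "\<forall>j<m l. d $ j = (if j = i then - sgn (blk e n l xs $ i) else 0)" "blk e n l xs $ i \<noteq> 0"
        "\<forall>t. 0 \<le> t \<and> t \<le> \<bar>blk e n l xs $ i\<bar> \<longrightarrow> trimmed (K l) (m l) 1 (blk e n l xs + t \<cdot>\<^sub>v d) \<le> trimmed (K l) (m l) 1 (blk e n l xs) - t"
        by blast
      have dn: "d \<in> carrier_vec (n l)" using d(1) mn by simp
      have "scalar_prod (blk e n l (g xs)) d \<ge> \<gamma> l * 1"
      proof (rule G[OF dn, of "\<bar>blk e n l xs $ i\<bar>"])
        show "0 < \<bar>blk e n l xs $ i\<bar>" using d(3) by simp
        fix t assume t: "0 < t" "t < \<bar>blk e n l xs $ i\<bar>"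
        have "blk e n l xs + t \<cdot>\<^sub>v d \<in> carrier_vec (n l)" using blk_carrier dn by simp
        thus "trimmed (K l) (m l) (p l) (D l *\<^sub>v (blk e n l xs + t \<cdot>\<^sub>v d) - c l) \<le> Tl xs - t * 1"
          using d(4) t unfolding Tl_def simpT[OF blk_carrier] B(1) by (simp add: simpT)
      qed
      moreover have "scalar_prod (blk e n l (g xs)) d = - inner (g xs) (e l i) * sgn (blk e n l xs $ i)"
      proof -
        have "scalar_prod (blk e n l (g xs)) d = (\<Sum>j\<in>{0..<n l}. if j = i then - inner (g xs) (e l i) * sgn (blk e n l xs $ i) else 0)"
          unfolding scalar_prod_def using dn d(2) mn by (intro sum.cong, auto simp: blk_def)
        also have "\<dots> = - inner (g xs) (e l i) * sgn (blk e n l xs $ i)" using i mn by simp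
        finally show ?thesis .
      qed
      moreover have "- inner (g xs) (e l i) * sgn (blk e n l xs $ i) \<le> \<bar>inner (g xs) (e l i)\<bar>" by (rule neg_sgn_le)
      moreover have "\<bar>inner (g xs) (e l i)\<bar> \<le> \<bar>inner (g 0) (e l i)\<bar> + norm (g xs - g 0)"
      proof -
        have "\<bar>inner (g xs - g 0) (e l i)\<bar> \<le> norm (g xs - g 0)"
          by (rule Basis_le_norm, rule eB[OF lL(1)], insert i mn, simp)
        thus ?thesis by (simp add: inner_diff_left)
      qed
      moreover have "\<bar>inner (g 0) (e l i)\<bar> \<le> vnorm_inf (blk e n l (g 0))"
        using vnorm_inf_ge[of i "blk e n l (g 0)"] i mn by (simp add: blk_def)
      ultimately show False using gdiff B(4) unfolding S_def by linarith
    qed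
  qed
qed

end
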